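(* Let $N\ge 1$, $m\ge 2$, and consider $N$ agents with states $x_i(t)\in\mathbb{R}^m$ obeying $\dot x_i(t)=Ax_i(t)+Bu_i(t)$, $i=1,\dots,N$, where $A$ and $B$ are the $m$-th order integrator matrices (see context). Let $\mathcal{G}_{\sigma(t)}$ be a switching family of weighted digraphs on $N$ nodes satisfying the dwell-time assumption, and apply the protocol $$u_i(t)=K_1x_i(t)-\sum_{j\in\mathcal{N}_i(\sigma(t))}\alpha^{ij}_{\sigma(t)}K_2\big(x_i(t)-x_j(t)\big),$$ with $K_1=(0,-a_1,-a_2,\dots,-a_{m-1})\in\mathbb{R}^{1\times m}$ and $K_2=(a_1,a_2,\dots,a_{m-1},1)\in\mathbb{R}^{1\times m}$, where $a_1,\dots,a_{m-1}\in\mathbb{R}$. Suppose all roots of $s^{m-1}+a_{m-1}s^{m-2}+\cdots+a_2s+a_1=0$ have strictly negative real part and $\mathcal{G}_{\sigma(t)}$ is uniformly jointly quasi-strongly connected. Then for every initial condition $x_1(0),\dots,x_N(0)$ there exists $\bar{x}^*\in\mathbb{R}$ such that $\lim_{t\to\infty}x_i(t)=(\bar x^*/a_1,0,\dots,0)^T$ for all $i=1,\dots,N$; in particular the multi-agent system reaches consensus.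
   Context: $A=\begin{pmatrix}0_{m-1}& I_{m-1}\\ 0 & 0_{m-1}^T\end{pmatrix}\in\mathbb{R}^{m\times m}$ (ones on the superdiagonal, zeros elsewhere) and $B=(0,\dots,0,1)^T\in\mathbb{R}^m$, so that $\dot x_{i,1}=x_{i,2},\dots,\dot x_{i,m-1}=x_{i,m},\dot x_{i,m}=u_i$. Graphs: nodes $v_1,\dots,v_N$ (node $v_i$ is agent $i$); an edge $e_{ij}$ from $v_j$ to $v_i$ means agent $i$ receives information from agent $j$; no self-edges. $\mathcal{S}$ is a finite index set of such digraphs; each graph $\mathcal{G}_k$, $k\in\mathcal{S}$, carries fixed weights $\alpha^{ij}_k>0$ for each edge $e_{ij}$ of $\mathcal{G}_k$ (and $\alpha^{ij}_k=0$ if $e_{ij}$ is not an edge). $\mathcal{N}_i(k)=\{j: e_{ij}\in\mathcal{G}_k\}$. $\sigma:[0,\infty)\to\mathcal{S}$ is piecewise constant; dwell-time assumption: the switching instants $t_0<t_1<\cdots$ satisfy $t_{i+1}-t_i\ge\tau_D$ for a constant $\tau_D>0$. A directed path is a sequence of distinct nodes $v_{i_1},\dots,v_{i_p}$ with $e_{i_{s+1}i_s}$ an edge for each $s$. A digraph is quasi-strongly connected if it has a node (root) from which there is a directed path to every other node. The union graph over $[t_1,t_2)$ has node set $\{v_1,\dots,v_N\}$ and edge set $\bigcup_{t\in[t_1,t_2)}\mathcal{E}(\mathcal{G}_{\sigma(t)})$. $\mathcal{G}_{\sigma(t)}$ is uniformly jointly quasi-strongly connected if there is $T>0$ such that the union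 graph over $[t,t+T)$ is quasi-strongly connected for every $t\ge 0$. The system reaches consensus if there exists $x^*\in\mathbb{R}^m$ with $\lim_{t\to\infty}x_i(t)=x^*$ for all $i$. *)

theory Defs
  imports "HOL-Analysis.Analysis"
begin

text \<open>Conventions: agents are indexed 0..N-1, state components 0..m-1
(component c corresponds to x_{i,c+1} of the paper). Switching graphs are
given by weights w k i j (weight alpha^{ij}_k of edge from v_j to v_i in G_k;
zero iff no edge).\<close>

definition intA :: "nat \<Rightarrow> nat \<Rightarrow> nat \<Rightarrow> real" where
  "intA m c d = (if d = c + 1 \<and> d < m then 1 else 0)"

definition intB :: "nat \<Rightarrow> nat \<Rightarrow> real" where
  "intB m c = (if c = m - 1 then 1 else 0)"

definition gainK1 :: "(nat \<Rightarrow> real) \<Rightarrow> nat \<Rightarrow> real" where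
  "gainK1 a c = (if c = 0 then 0 else - a c)"

definition gainK2 :: "(nat \<Rightarrow> real) \<Rightarrow> nat \<Rightarrow> nat \<Rightarrow> real" where
  "gainK2 a m c = (if c = m - 1 then 1 else a (c + 1))"

definition neighbors :: "nat \<Rightarrow> ('s \<Rightarrow> nat \<Rightarrow> nat \<Rightarrow> real) \<Rightarrow> 's \<Rightarrow> nat \<Rightarrow> nat set" where
  "neighbors N w k i = {j. j < N \<and> w k i j > 0}"

definition protocol ::
  "nat \<Rightarrow> nat \<Rightarrow> (nat \<Rightarrow> real) \<Rightarrow> ('s \<Rightarrow> nat \<Rightarrow> nat \<Rightarrow> real) \<Rightarrow> (real \<Rightarrow> 's)
   \<Rightarrow> (nat \<Rightarrow> real \<Rightarrow> nat \<Rightarrow> real) \<Rightarrow> nat \<Rightarrow> real \<Rightarrow> real" where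
  "protocol N m a w \<sigma> x i t =
     (\<Sum>c<m. gainK1 a c * x i t c)
     - (\<Sum>j\<in>neighbors N w (\<sigma> t) i. w (\<sigma> t) i j * (\<Sum>c<m. gainK2 a m c * (x i t c - x j t c)))"

text \<open>Edge relation (pairs (j,i): edge from v_j to v_i) of the union graph over [t1,t2).\<close>
definition union_edges ::
  "nat \<Rightarrow> ('s \<Rightarrow> nat \<Rightarrow> nat \<Rightarrow> real) \<Rightarrow> (real \<Rightarrow> 's) \<Rightarrow> real \<Rightarrow> real \<Rightarrow> (nat \<times> nat) set" where
  "union_edges N w \<sigma> t1 t2 =
     {(j, i). j < N \<and> i < N \<and> (\<exists>t\<in>{t1..<t2}. w (\<sigma> t) i j > 0)}"

definition quasi_strongly_connected :: "nat \<Rightarrow> (nat \<times> nat) set \<Rightarrow> bool" where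
  "quasi_strongly_connected N E \<longleftrightarrow> (\<exists>r<N. \<forall>i<N. (r, i) \<in> E\<^sup>*)"

definition ujqsc :: "nat \<Rightarrow> ('s \<Rightarrow> nat \<Rightarrow> nat \<Rightarrow> real) \<Rightarrow> (real \<Rightarrow> 's) \<Rightarrow> bool" where
  "ujqsc N w \<sigma> \<longleftrightarrow> (\<exists>T>0. \<forall>t\<ge>0. quasi_strongly_connected N (union_edges N w \<sigma> t (t + T)))"

definition dwell_time_switching ::
  "'s set \<Rightarrow> (real \<Rightarrow> 's) \<Rightarrow> (nat \<Rightarrow> real) \<Rightarrow> real \<Rightarrow> bool" where
  "dwell_time_switching S \<sigma> ts tauD \<longleftrightarrow>
     tauD > 0 \<and> ts 0 = 0 \<and> (\<forall>n. ts (Suc n) - ts n \<ge> tauD) \<and>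
     (\<forall>n t. ts n \<le> t \<and> t < ts (Suc n) \<longrightarrow> \<sigma> t = \<sigma> (ts n)) \<and>
     (\<forall>t\<ge>0. \<sigma> t \<in> S)"

definition closed_loop_solution ::
  "nat \<Rightarrow> nat \<Rightarrow> (nat \<Rightarrow> real) \<Rightarrow> ('s \<Rightarrow> nat \<Rightarrow> nat \<Rightarrow> real) \<Rightarrow> (real \<Rightarrow> 's)
   \<Rightarrow> (nat \<Rightarrow> real) \<Rightarrow> (nat \<Rightarrow> real \<Rightarrow> nat \<Rightarrow> real) \<Rightarrow> bool" where
  "closed_loop_solution N m a w \<sigma> ts x \<longleftrightarrow>
     (\<forall>i<N. \<forall>c<m. continuous_on {0..} (\<lambda>t. x i t c)) \<and>
     (\<forall>i<N. \<forall>c<m. \<forall>t\<ge>0. t \<notin> range ts \<longrightarrow>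
        ((\<lambda>s. x i s c) has_real_derivative
           ((\<Sum>d<m. intA m c d * x i t d) + intB m c * protocol N m a w \<sigma> x i t))
        (at t within {0..}))"

end

theory Submission
  imports Defs "HOL-Real_Asymp.Real_Asymp" "HOL-Computational_Algebra.Fundamental_Theorem_Algebra"
begin



lemma mono_fin:
  fixes f f' :: "real \<Rightarrow> real"
  assumes fin: "finite (C \<inter> {a..b})" and ab: "a \<le> b"
    and der: "\<And>x. x \<in> {a<..<b} \<Longrightarrow> x \<notin> C \<Longrightarrow> (f has_real_derivative f' x) (at x) \<and> f' x \<ge> 0"
    and cont: "continuous_on {a..b} f"
  shows "f a \<le> f b"
proof -
  have "((\<lambda>x. max 0 (f' x)) has_integral (f b - f a)) {a..b}"
  proof (rule fundamental_theorem_of_calculus_interior_strong[OF fin ab _ cont])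
    fix x assume "x \<in> {a<..<b} - C \<inter> {a..b}"
    then have "x \<in> {a<..<b}" "x \<notin> C" by auto
    from der[OF this] show "(f has_vector_derivative max 0 (f' x)) (at x)"
      by (auto simp: has_real_derivative_iff_has_vector_derivative[symmetric] max_def)
  qed
  then have "0 \<le> f b - f a" by (rule has_integral_nonneg) auto
  then show ?thesis by simp
qed

lemma norm_bound_fin:
  fixes q q' :: "real \<Rightarrow> 'a::banach" and G g :: "real \<Rightarrow> real"
  assumes fin: "finite (C \<inter> {a..b})" and ab: "a \<le> b"
    and der: "\<And>x. x \<in> {a<..<b} \<Longrightarrow> x \<notin> C \<Longrightarrow> (q has_vector_derivative q' x) (at x)
        \<and> (G has_real_derivative g x) (at x) \<and> norm (q' x) \<le> g x"
    and cont: "continuous_on {a..b} q" "continuous_on {a..b} G"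
  shows "norm (q b - q a) \<le> G b - G a"
proof -
  define P where "P = {a<..<b} - C"
  define q'' where "q'' x = (if x \<in> P then q' x else 0)" for x
  define g'' where "g'' x = (if x \<in> P then g x else 0)" for x
  have fin': "finite (C \<inter> {a..b})" using fin by simp
  have 1: "(q'' has_integral (q b - q a)) {a..b}"
  proof (rule fundamental_theorem_of_calculus_interior_strong[OF fin ab _ cont(1)])
    fix x assume "x \<in> {a<..<b} - C \<inter> {a..b}"
    then have "x \<in> {a<..<b}" "x \<notin> C" by auto
    with der[OF this] show "(q has_vector_derivative q'' x) (at x)"
      by (auto simp: q''_def P_def)
  qed
  have 2: "(g'' has_integral (G b - G a)) {a..b}"
  proof (rule fundamental_theorem_of_calculus_interior_strong[OF fin ab _ cont(2)])
    fix x assume "x \<in> {a<..<b} - C \<inter> {a..b}"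
    then have "x \<in> {a<..<b}" "x \<notin> C" by auto
    with der[OF this] show "(G has_vector_derivative g'' x) (at x)"
      by (auto simp: g''_def P_def has_real_derivative_iff_has_vector_derivative[symmetric])
  qed
  have "norm (integral {a..b} q'') \<le> integral {a..b} g''"
    apply (rule integral_norm_bound_integral)
    using 1 2 der by (auto simp: q''_def g''_def P_def)
  then show ?thesis using 1 2 by (simp add: integral_unique)
qed




lemma scalar_conv:
  fixes f g :: "real \<Rightarrow> complex" and l :: complex
  assumes neg: "Re l < 0" and cont: "continuous_on {t0..} f"
    and fin: "\<And>a b. finite (C \<inter> {a..b})"
    and der: "\<And>t. t > t0 \<Longrightarrow> t \<notin> C \<Longrightarrow> (f has_vector_derivative (l * f t + g t)) (at t)"
    and lim: "(g \<longlongrightarrow> 0) at_top"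
  shows "(f \<longlongrightarrow> 0) at_top"
proof (rule tendstoI)
  fix e :: real assume e: "e > 0"
  define mu where "mu = - Re l"
  have mu: "mu > 0" using neg by (simp add: mu_def)
  define e' where "e' = e * mu / 2"
  have e': "e' > 0" using e mu by (simp add: e'_def)
  from tendstoD[OF lim e'] obtain T0 where T0: "\<And>t. t \<ge> T0 \<Longrightarrow> norm (g t) < e'"
    by (auto simp: eventually_at_top_linorder)
  define T1 where "T1 = max T0 (t0 + 1)"
  have T1: "T1 \<ge> T0" "T1 > t0" by (auto simp: T1_def)
  have bound: "norm (f t) \<le> exp (- mu * (t - T1)) * norm (f T1) + e / 2" if t: "t \<ge> T1" for t
  proof -
    define q where "q s = exp (- l * (of_real s - of_real T1)) * f s" for s
    define G where "G s = e' * exp (mu * (s - T1)) / mu" for s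
    have "norm (q t - q T1) \<le> G t - G T1"
    proof (rule norm_bound_fin[OF fin t])
      fix s assume s: "s \<in> {T1<..<t}" "s \<notin> C"
      have E: "((\<lambda>s. exp (- l * (of_real s - of_real T1))) has_vector_derivative
               (- l * exp (- l * (of_real s - of_real T1)))) (at s)"
        by (rule has_vector_derivative_real_field) (auto intro!: derivative_eq_intros)
      have F: "(f has_vector_derivative (l * f s + g s)) (at s)"
        using s T1 by (intro der) auto
      have "(q has_vector_derivative (exp (- l * (of_real s - of_real T1)) * g s)) (at s)"
        unfolding q_def
        using has_vector_derivative_mult[OF E F] by (simp add: algebra_simps)
      moreover have "(G has_real_derivative (e' * exp (mu * (s - T1)))) (at s)"
        unfolding G_def using mu by (auto intro!: derivative_eq_intros)
      moreover have "norm (exp (- l * (of_real s - of_real T1)) * g s) \<le> e' * exp (mu * (s - T1))"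
      proof -
        have "norm (exp (- l * (of_real s - of_real T1))) = exp (mu * (s - T1))"
          by (simp add: mu_def)
        moreover have "norm (g s) \<le> e'" using T0[of s] s T1 by auto
        ultimately show ?thesis by (simp add: norm_mult mult.commute mult_left_mono)
      qed
      ultimately show "(q has_vector_derivative (exp (- l * (of_real s - of_real T1)) * g s)) (at s) \<and>
          (G has_real_derivative (e' * exp (mu * (s - T1)))) (at s) \<and>
          norm (exp (- l * (of_real s - of_real T1)) * g s) \<le> e' * exp (mu * (s - T1))" by blast
    next
      show "continuous_on {T1..t} q" unfolding q_def
        by (intro continuous_intros continuous_on_subset[OF cont]) (use T1 in auto)
      show "continuous_on {T1..t} G" unfolding G_def using mu by (intro continuous_intros) auto
    qed
    then have "norm (q t) \<le> norm (q T1) + G t" using mu e'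
      by (smt (verit) G_def divide_pos_pos exp_gt_zero mult_pos_pos norm_triangle_ineq2)
    moreover have "norm (q t) = exp (mu * (t - T1)) * norm (f t)"
      by (simp add: q_def norm_mult mu_def)
    moreover have "q T1 = f T1" by (simp add: q_def)
    ultimately have "exp (mu * (t - T1)) * norm (f t) \<le> norm (f T1) + e' * exp (mu * (t - T1)) / mu"
      by (simp add: G_def)
    moreover have Epos: "exp (mu * (t - T1)) > 0" by simp
    ultimately have "norm (f t) \<le> (norm (f T1) + e' * exp (mu * (t - T1)) / mu) / exp (mu * (t - T1))"
      by (simp add: pos_le_divide_eq mult.commute)
    also have "\<dots> = norm (f T1) / exp (mu * (t - T1)) + e' / mu"
      using Epos by (simp add: add_divide_distrib)
    also have "norm (f T1) / exp (mu * (t - T1)) = exp (- (mu * (t - T1))) * norm (f T1)"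
      by (simp add: exp_minus divide_inverse mult.commute)
    finally have "norm (f t) \<le> exp (- (mu * (t - T1))) * norm (f T1) + e' / mu" .
    then show ?thesis using mu by (simp add: e'_def)
  qed
  have "((\<lambda>t. exp (- mu * (t - T1)) * norm (f T1)) \<longlongrightarrow> 0) at_top"
    using mu by real_asymp
  then have "eventually (\<lambda>t. exp (- mu * (t - T1)) * norm (f T1) < e / 2) at_top"
    using e by (auto dest!: order_tendstoD(2)[where a = "e/2"])
  moreover have "eventually (\<lambda>t. t \<ge> T1) at_top" by (rule eventually_ge_at_top)
  ultimately show "eventually (\<lambda>t. dist (f t) 0 < e) at_top"
    by eventually_elim (use bound in force)
qed




lemma poly_conv:
  fixes p :: "complex poly" and y :: "nat \<Rightarrow> real \<Rightarrow> complex" and r :: "real \<Rightarrow> complex"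
  assumes "degree p = n" "n \<ge> 1" "lead_coeff p = 1" "\<forall>z. poly p z = 0 \<longrightarrow> Re z < 0"
    "\<forall>k<n. continuous_on {ta..} (y k)"
    "\<And>a b. finite (C \<inter> {a..b})"
    "\<forall>t>ta. t \<notin> C \<longrightarrow> (\<forall>k. k + 1 < n \<longrightarrow> (y k has_vector_derivative y (k+1) t) (at t))"
    "\<forall>t>ta. t \<notin> C \<longrightarrow> (y (n-1) has_vector_derivative (r t - (\<Sum>k<n. coeff p k * y k t))) (at t)"
    "(r \<longlongrightarrow> 0) at_top"
  shows "\<forall>k<n. (y k \<longlongrightarrow> 0) at_top"
  using assms
proof (induction n arbitrary: p y r)
  case 0
  then show ?case by simp
next
  case (Suc n)
  note fin = Suc.prems(6)
  have pnz: "p \<noteq> 0" using Suc.prems(3) by auto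
  obtain l where l: "poly p l = 0"
    using fundamental_theorem_of_algebra_alt[of p] Suc.prems(1) by fastforce
  have lneg: "Re l < 0" using l Suc.prems(4) by blast
  obtain q where pq: "p = [:-l, 1:] * q" using l poly_eq_0_iff_dvd by (metis dvdE)
  have qnz: "q \<noteq> 0" using pq pnz by auto
  have "degree ([:-l, 1:] * q) = degree [:-l, 1:] + degree q"
    by (rule degree_mult_eq) (use qnz in auto)
  then have degq: "degree q = n" using Suc.prems(1) unfolding pq[symmetric] by simp
  have "lead_coeff ([:-l, 1:] * q) = lead_coeff q"
    by (subst lead_coeff_mult) simp
  then have lcq: "lead_coeff q = 1" using Suc.prems(3) unfolding pq[symmetric] by simp
  have cp: "coeff p k = (if k = 0 then 0 else coeff q (k - 1)) - l * coeff q k" for k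
    using pq by (cases k) auto
  show ?case
  proof (cases "n = 0")
    case True
    have y0: "(y 0 has_vector_derivative (l * y 0 t + r t)) (at t)" if "t > ta" "t \<notin> C" for t
    proof -
      have "(y 0 has_vector_derivative (r t - coeff p 0 * y 0 t)) (at t)"
        using Suc.prems(8) that True by auto
      moreover have "coeff p 0 = - l" using cp[of 0] degq lcq True by simp
      ultimately show ?thesis by (simp add: algebra_simps)
    qed
    have "(y 0 \<longlongrightarrow> 0) at_top"
      by (rule scalar_conv[OF lneg _ fin y0 Suc.prems(9)]) (use Suc.prems(5) True in auto)
    then show ?thesis using True by auto
  next
    case False
    define wf where "wf k t = y (k+1) t - l * y k t" for k t
    have IH: "\<forall>k<n. (wf k \<longlongrightarrow> 0) at_top"
    proof (rule Suc.IH[of q wf r])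
      show "degree q = n" "1 \<le> n" "lead_coeff q = 1" using degq lcq False by auto
      show "\<forall>z. poly q z = 0 \<longrightarrow> Re z < 0" using Suc.prems(4) pq by auto
      show "\<forall>k<n. continuous_on {ta..} (wf k)" unfolding wf_def
        using Suc.prems(5) by (auto intro!: continuous_intros)
      show "\<And>a b. finite (C \<inter> {a..b})" by (rule fin)
      show "\<forall>t>ta. t \<notin> C \<longrightarrow> (\<forall>k. k + 1 < n \<longrightarrow> (wf k has_vector_derivative wf (k + 1) t) (at t))"
      proof (intro allI impI)
        fix t k assume t: "t > ta" "t \<notin> C" and k: "k + 1 < n"
        have "(y (k+1) has_vector_derivative y (k+2) t) (at t)" "(y k has_vector_derivative y (k+1) t) (at t)"
          using Suc.prems(7) t k by auto
        then have "((\<lambda>t. y (k+1) t - l * y k t) has_vector_derivative (y (k+2) t - l * y (k+1) t)) (at t)"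
          by (intro derivative_intros) auto
        then show "(wf k has_vector_derivative wf (k + 1) t) (at t)" by (simp add: wf_def[abs_def])
      qed
      show "\<forall>t>ta. t \<notin> C \<longrightarrow> (wf (n - 1) has_vector_derivative r t - (\<Sum>k<n. coeff q k * wf k t)) (at t)"
      proof (intro allI impI)
        fix t assume t: "t > ta" "t \<notin> C"
        have d1: "(y n has_vector_derivative (r t - (\<Sum>k<Suc n. coeff p k * y k t))) (at t)"
          using Suc.prems(8) t by auto
        have "n - 1 + 1 < Suc n" using False by simp
        then have "(y (n-1) has_vector_derivative y (n-1+1) t) (at t)" using Suc.prems(7) t by blast
        then have d2: "(y (n-1) has_vector_derivative y n t) (at t)" using False by simp
        have dd: "((\<lambda>t. y n t - l * y (n-1) t) has_vector_derivative
               ((r t - (\<Sum>k<Suc n. coeff p k * y k t)) - l * y n t)) (at t)"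
          by (rule has_vector_derivative_diff[OF d1 has_vector_derivative_mult_right[OF d2]])
        have e1: "(\<Sum>k<Suc n. coeff p k * y k t)
              = (\<Sum>k<Suc n. (if k = 0 then 0 else coeff q (k - 1)) * y k t) - l * (\<Sum>k<Suc n. coeff q k * y k t)"
          by (simp only: cp left_diff_distrib sum_subtractf mult.assoc sum_distrib_left)
        have e2: "(\<Sum>k<Suc n. (if k = 0 then 0 else coeff q (k - 1)) * y k t) = (\<Sum>k<n. coeff q k * y (k+1) t)"
          by (subst sum.lessThan_Suc_shift) simp
        have e3: "(\<Sum>k<Suc n. coeff q k * y k t) = (\<Sum>k<n. coeff q k * y k t) + y n t"
          using degq lcq by simp
        have e4: "(\<Sum>k<n. coeff q k * wf k t) = (\<Sum>k<n. coeff q k * y (k+1) t) - l * (\<Sum>k<n. coeff q k * y k t)"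
          by (simp only: wf_def right_diff_distrib sum_subtractf sum_distrib_left mult.left_commute)
        have "(\<Sum>k<Suc n. coeff p k * y k t) + l * y n t = (\<Sum>k<n. coeff q k * wf k t)"
          unfolding e1 e2 e3 e4 by (simp add: algebra_simps)
        then have "r t - (\<Sum>k<n. coeff q k * wf k t) = (r t - (\<Sum>k<Suc n. coeff p k * y k t)) - l * y n t"
          by (simp add: algebra_simps)
        moreover have "(\<lambda>t. y n t - l * y (n-1) t) = wf (n - 1)"
          using False by (auto simp: wf_def)
        ultimately show "(wf (n - 1) has_vector_derivative r t - (\<Sum>k<n. coeff q k * wf k t)) (at t)"
          using dd by metis
      qed
      show "(r \<longlongrightarrow> 0) at_top" by (rule Suc.prems(9))
    qed
    have y0: "(y 0 \<longlongrightarrow> 0) at_top"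
    proof (rule scalar_conv[OF lneg _ fin, of ta _ "wf 0"])
      show "continuous_on {ta..} (y 0)" using Suc.prems(5) by auto
      show "(wf 0 \<longlongrightarrow> 0) at_top" using IH False by auto
      fix t assume "t > ta" "t \<notin> C"
      then have "(y 0 has_vector_derivative y 1 t) (at t)" using Suc.prems(7) False by auto
      then show "(y 0 has_vector_derivative l * y 0 t + wf 0 t) (at t)" by (simp add: wf_def)
    qed
    have "k < Suc n \<Longrightarrow> (y k \<longlongrightarrow> 0) at_top" for k
    proof (induction k)
      case 0 show ?case using y0 by blast
    next
      case (Suc k)
      then have "((\<lambda>t. wf k t + l * y k t) \<longlongrightarrow> 0 + l * 0) at_top"
        using IH by (intro tendsto_intros) auto
      then show ?case by (simp add: wf_def)
    qed
    then show ?thesis by auto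
  qed
qed




lemma psi_deriv: "((\<lambda>x::real. (max 0 x)^2) has_real_derivative (2 * max 0 x)) (at x)"
proof -
  consider "x > 0" | "x < 0" | "x = 0" by linarith
  then show ?thesis
  proof cases
    case 1
    have d: "((\<lambda>x::real. x^2) has_real_derivative (2 * x)) (at x)"
      by (auto intro!: derivative_eq_intros)
    have eq: "2 * max 0 x = 2 * x" using 1 by simp
    show ?thesis unfolding eq using d
      by (rule has_field_derivative_transform_within_open[of _ _ _ "{0<..}"]) (use 1 in auto)
  next
    case 2
    have d: "((\<lambda>x::real. 0) has_real_derivative 0) (at x)" by simp
    have eq: "2 * max 0 x = 0" using 2 by simp
    show ?thesis unfolding eq using d
      by (rule has_field_derivative_transform_within_open[of _ _ _ "{..<0}"]) (use 2 in auto)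
  next
    case 3
    have "((\<lambda>y::real. max 0 y) \<longlongrightarrow> max 0 0) (at 0)"
      by (intro tendsto_intros)
    then have lim: "((\<lambda>y::real. max 0 y) \<longlongrightarrow> 0) (at 0)" by simp
    have ev: "eventually (\<lambda>y::real. max 0 y = ((max 0 y)^2 - (max 0 0)^2) / (y - 0)) (at 0)"
      unfolding eventually_at_filter by (rule always_eventually) (auto simp: power2_eq_square max_def)
    have "((\<lambda>y::real. ((max 0 y)^2 - (max 0 0)^2) / (y - 0)) \<longlongrightarrow> 0) (at 0)"
      by (rule Lim_transform_eventually[OF lim ev])
    then show ?thesis using 3 by (simp add: has_field_derivative_iff)
  qed
qed

lemma exp_comp0:
  fixes f f' :: "real \<Rightarrow> real"
  assumes fin: "finite (E \<inter> {a..b})" and ab: "a \<le> b"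
    and der: "\<And>s. s \<in> {a<..<b} \<Longrightarrow> s \<notin> E \<Longrightarrow> (f has_real_derivative f' s) (at s) \<and> f' s \<ge> - K * f s"
    and cont: "continuous_on {a..b} f"
  shows "f b \<ge> exp (- K * (b - a)) * f a"
proof -
  define h where "h s = exp (K * s) * f s" for s
  have "h a \<le> h b"
  proof (rule mono_fin[OF fin ab, of h "\<lambda>s. exp (K * s) * (f' s + K * f s)"])
    fix s assume s: "s \<in> {a<..<b}" "s \<notin> E"
    from der[OF s] have d: "(f has_real_derivative f' s) (at s)" and g: "f' s \<ge> - K * f s" by auto
    have e: "((\<lambda>s. exp (K * s)) has_real_derivative exp (K * s) * K) (at s)"
      by (auto intro!: derivative_eq_intros)
    have "(h has_real_derivative (exp (K * s) * K * f s + f' s * exp (K * s))) (at s)"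
      unfolding h_def by (rule DERIV_mult[OF e d])
    moreover have "exp (K * s) * (f' s + K * f s) \<ge> 0" using g by (intro mult_nonneg_nonneg) auto
    ultimately show "(h has_real_derivative exp (K * s) * (f' s + K * f s)) (at s) \<and> 0 \<le> exp (K * s) * (f' s + K * f s)"
      by (simp add: algebra_simps)
  next
    show "continuous_on {a..b} h" unfolding h_def by (intro continuous_intros cont)
  qed
  then have "exp (K * a) * f a \<le> exp (K * b) * f b" by (simp add: h_def)
  then have "exp (- K * b) * (exp (K * a) * f a) \<le> exp (- K * b) * (exp (K * b) * f b)"
    by (intro mult_left_mono) auto
  moreover have "exp (- K * b) * (exp (K * b) * f b) = (exp (- K * b) * exp (K * b)) * f b"
    by (simp only: mult.assoc)
  moreover have "exp (- K * b) * exp (K * b) = 1"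
    by (simp add: exp_add[symmetric])
  moreover have "exp (- K * b) * (exp (K * a) * f a) = (exp (- K * b) * exp (K * a)) * f a"
    by (simp only: mult.assoc)
  moreover have "exp (- K * b) * exp (K * a) = exp (- K * (b - a))"
    by (simp add: exp_add[symmetric] right_diff_distrib)
  ultimately show ?thesis by (metis mult_1)
qed

lemma exp_compL:
  fixes f f' :: "real \<Rightarrow> real"
  assumes fin: "finite (E \<inter> {a..b})" and ab: "a \<le> b" and K: "K > 0"
    and der: "\<And>s. s \<in> {a<..<b} \<Longrightarrow> s \<notin> E \<Longrightarrow> (f has_real_derivative f' s) (at s) \<and> f' s \<ge> L - K * f s"
    and cont: "continuous_on {a..b} f"
  shows "f b - L / K \<ge> exp (- K * (b - a)) * (f a - L / K)"
proof (rule exp_comp0[OF fin ab, of "\<lambda>s. f s - L / K" f'])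
  fix s assume s: "s \<in> {a<..<b}" "s \<notin> E"
  from der[OF s] K show "((\<lambda>s. f s - L / K) has_real_derivative f' s) (at s) \<and> - K * (f s - L / K) \<le> f' s"
    by (auto intro!: derivative_eq_intros simp: algebra_simps)
qed (intro continuous_intros cont)




locale cons_sys =
  fixes N :: nat and W :: "real \<Rightarrow> nat \<Rightarrow> nat \<Rightarrow> real" and E :: "real set" and Wmax :: real
  assumes N1: "N \<ge> 1" and finE: "\<And>a b. finite (E \<inter> {a..b})"
    and Wnn: "\<And>t i j. t \<ge> 0 \<Longrightarrow> W t i j \<ge> 0"
    and Wle: "\<And>t i j. t \<ge> 0 \<Longrightarrow> i < N \<Longrightarrow> j < N \<Longrightarrow> W t i j \<le> Wmax"
begin

definition D where "D = real N * Wmax + 1"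

definition sol where
  "sol z \<longleftrightarrow> (\<forall>i<N. continuous_on {0..} (z i)) \<and>
     (\<forall>i<N. \<forall>t>0. t \<notin> E \<longrightarrow> (z i has_real_derivative (\<Sum>j<N. W t i j * (z j t - z i t))) (at t))"

lemma Wmax_nn: "Wmax \<ge> 0"
  using Wnn[of 0 0 0] Wle[of 0 0 0] N1 by auto

lemma D_pos: "D > 0"
proof -
  have "real N * Wmax \<ge> 0" by (simp add: Wmax_nn)
  then show ?thesis by (simp add: D_def)
qed

lemma sumW_le: "t \<ge> 0 \<Longrightarrow> i < N \<Longrightarrow> (\<Sum>j<N. W t i j) \<le> real N * Wmax"
  using sum_bounded_above[of "{..<N}" "W t i" Wmax] Wle by auto

lemma NW_le_D: "real N * Wmax \<le> D" by (simp add: D_def)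

lemma sol_neg: "sol z \<Longrightarrow> sol (\<lambda>i t. - z i t)"
  unfolding sol_def
proof (intro conjI allI impI; elim conjE)
  fix i assume "\<forall>i<N. continuous_on {0..} (z i)" "i < N"
  then show "continuous_on {0..} (\<lambda>t. - z i t)" by (auto intro!: continuous_intros)
next
  fix i t assume d: "\<forall>i<N. \<forall>t>0. t \<notin> E \<longrightarrow> (z i has_real_derivative (\<Sum>j<N. W t i j * (z j t - z i t))) (at t)"
    and it: "i < N" "0 < t" "t \<notin> E"
  have "((\<lambda>t. - z i t) has_real_derivative - (\<Sum>j<N. W t i j * (z j t - z i t))) (at t)"
    using d it by (auto intro!: derivative_intros)
  moreover have "- (\<Sum>j<N. W t i j * (z j t - z i t)) = (\<Sum>j<N. W t i j * (- z j t - - z i t))"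
    by (simp add: sum_negf[symmetric] algebra_simps)
  ultimately show "((\<lambda>t. - z i t) has_real_derivative (\<Sum>j<N. W t i j * (- z j t - - z i t))) (at t)"
    by simp
qed

lemma sol_cont: "sol z \<Longrightarrow> i < N \<Longrightarrow> 0 \<le> a \<Longrightarrow> continuous_on {a..b} (z i)"
  unfolding sol_def by (auto intro: continuous_on_subset)

lemma sol_der: "sol z \<Longrightarrow> i < N \<Longrightarrow> t > 0 \<Longrightarrow> t \<notin> E \<Longrightarrow>
    (z i has_real_derivative (\<Sum>j<N. W t i j * (z j t - z i t))) (at t)"
  unfolding sol_def by auto

lemma pair_bound:
  fixes p q zi zj M Wij :: real
  assumes "p = max 0 (zi - M)" "q = max 0 (zj - M)" "0 \<le> Wij" "Wij \<le> Wmax"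
  shows "Wij * (p * (zj - zi)) \<le> Wmax * ((p^2 + q^2) / 2)"
proof -
  have "p * (zj - zi) \<le> p * q"
    using assms(1,2) by (cases "zi \<le> M") (auto intro!: mult_left_mono)
  also have "\<dots> \<le> (p^2 + q^2) / 2"
    using sum_squares_bound[of p q] by (simp add: power2_eq_square field_simps)
  finally have 1: "p * (zj - zi) \<le> (p^2 + q^2) / 2" .
  have "Wij * (p * (zj - zi)) \<le> Wij * ((p^2 + q^2) / 2)" by (rule mult_left_mono[OF 1 assms(3)])
  also have "\<dots> \<le> Wmax * ((p^2 + q^2) / 2)" by (rule mult_right_mono[OF assms(4)]) simp
  finally show ?thesis .
qed

lemma inv_upper:
  assumes z: "sol z" and t0: "0 \<le> t0" "t0 \<le> t" and M: "\<forall>i<N. z i t0 \<le> M" and i: "i < N"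
  shows "z i t \<le> M"
proof -
  define p where "p i s = max 0 (z i s - M)" for i s
  define V where "V s = (\<Sum>i<N. (p i s)^2)" for s
  define zd where "zd i s = (\<Sum>j<N. W s i j * (z j s - z i s))" for i s
  have V0: "V t0 = 0" using M by (simp add: V_def p_def)
  have "- V t \<ge> exp (- (- 2 * D) * (t - t0)) * (- V t0)"
  proof (rule exp_comp0[OF finE t0(2), of "\<lambda>s. - V s" "\<lambda>s. - (\<Sum>i<N. 2 * p i s * zd i s)"])
    fix s assume s: "s \<in> {t0<..<t}" "s \<notin> E"
    then have s0: "s > 0" using t0 by auto
    have "(V has_real_derivative (\<Sum>i<N. 2 * p i s * zd i s)) (at s)"
      unfolding V_def
    proof (rule DERIV_sum)
      fix i assume "i \<in> {..<N}"
      then have dz: "((\<lambda>s. z i s - M) has_real_derivative zd i s) (at s)"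
        using sol_der[OF z _ s0 s(2)] by (auto simp: zd_def intro!: derivative_eq_intros)
      show "((\<lambda>s. (p i s)^2) has_real_derivative 2 * p i s * zd i s) (at s)"
        unfolding p_def using DERIV_chain2[OF psi_deriv dz] by simp
    qed
    then have dV: "((\<lambda>s. - V s) has_real_derivative - (\<Sum>i<N. 2 * p i s * zd i s)) (at s)"
      by (rule DERIV_minus)
    have "(\<Sum>i<N. 2 * p i s * zd i s) = 2 * (\<Sum>i<N. \<Sum>j<N. W s i j * (p i s * (z j s - z i s)))"
      by (simp add: zd_def sum_distrib_left mult_ac)
    also have "\<dots> \<le> 2 * (\<Sum>i<N. \<Sum>j<N. Wmax * (((p i s)^2 + (p j s)^2) / 2))"
      using Wnn Wle s0 by (intro mult_left_mono sum_mono pair_bound[OF p_def p_def]) auto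
    also have "(\<Sum>i<N. \<Sum>j<N. Wmax * (((p i s)^2 + (p j s)^2) / 2))
        = Wmax / 2 * (\<Sum>i<N. (real N * (p i s)^2 + V s))"
      by (simp add: V_def sum_distrib_left[symmetric] sum.distrib add_divide_distrib
          sum_divide_distrib[symmetric] algebra_simps)
    also have "(\<Sum>i<N. (real N * (p i s)^2 + V s)) = 2 * real N * V s"
      by (simp add: sum.distrib V_def sum_distrib_left[symmetric])
    finally have "(\<Sum>i<N. 2 * p i s * zd i s) \<le> 2 * (real N * Wmax) * V s" by (simp add: algebra_simps)
    also have "\<dots> \<le> 2 * D * V s"
      using NW_le_D by (intro mult_right_mono mult_left_mono) (auto simp: V_def sum_nonneg)
    finally have "- (- 2 * D) * - V s \<le> - (\<Sum>i<N. 2 * p i s * zd i s)" by simp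
    with dV show "((\<lambda>s. - V s) has_real_derivative - (\<Sum>i<N. 2 * p i s * zd i s)) (at s) \<and>
          - (- 2 * D) * - V s \<le> - (\<Sum>i<N. 2 * p i s * zd i s)" by simp
  next
    show "continuous_on {t0..t} (\<lambda>s. - V s)" unfolding V_def p_def
      using sol_cont[OF z _ t0(1)] by (intro continuous_intros) auto
  qed
  then have "V t \<le> 0" using V0 by simp
  moreover have "V t \<ge> 0" by (simp add: V_def sum_nonneg)
  ultimately have "V t = 0" by simp
  then have "(p i t)^2 = 0" unfolding V_def using i
    by (subst (asm) sum_nonneg_eq_0_iff) auto
  then show ?thesis by (simp add: p_def)
qed

lemma inv_lower:
  assumes z: "sol z" and t0: "0 \<le> t0" "t0 \<le> t" and M: "\<forall>i<N. z i t0 \<ge> m0" and i: "i < N"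
  shows "z i t \<ge> m0"
  using inv_upper[OF sol_neg[OF z] t0, of "- m0" i] M i by auto

end




context cons_sys begin

lemma zd_lower:
  assumes s: "s \<ge> 0" and lo: "\<forall>k<N. z k s \<ge> mm" and j: "j < N" and i: "i < N"
  shows "(\<Sum>k<N. W s j k * (z k s - z j s)) \<ge> W s j i * (z i s - mm) - D * (z j s - mm)"
proof -
  have "(\<Sum>k<N. W s j k * (z k s - z j s)) = (\<Sum>k<N. W s j k * (z k s - mm) - W s j k * (z j s - mm))"
    by (rule sum.cong) (auto simp: algebra_simps)
  also have "\<dots> = (\<Sum>k<N. W s j k * (z k s - mm)) - (\<Sum>k<N. W s j k) * (z j s - mm)"
    by (simp add: sum_subtractf sum_distrib_right)
  finally have "(\<Sum>k<N. W s j k * (z k s - z j s)) = (\<Sum>k<N. W s j k * (z k s - mm)) - (\<Sum>k<N. W s j k) * (z j s - mm)" .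
  moreover have "W s j i * (z i s - mm) \<le> (\<Sum>k<N. W s j k * (z k s - mm))"
    using i lo Wnn[OF s] by (intro member_le_sum) (auto intro!: mult_nonneg_nonneg)
  moreover have "(\<Sum>k<N. W s j k) * (z j s - mm) \<le> D * (z j s - mm)"
    using lo j sumW_le[OF s j] NW_le_D by (intro mult_right_mono) auto
  ultimately show ?thesis by linarith
qed

lemma decay:
  assumes z: "sol z" and t1: "0 \<le> t1" "t1 \<le> t" and lo: "\<forall>s\<ge>t1. \<forall>k<N. z k s \<ge> m0"
    and i: "i < N" and b: "z i t1 - m0 \<ge> \<beta>" "\<beta> \<ge> 0"
  shows "z i t - m0 \<ge> \<beta> * exp (- D * (t - t1))"
proof -
  have "z i t - m0 \<ge> exp (- D * (t - t1)) * (z i t1 - m0)"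
  proof (rule exp_comp0[OF finE t1(2), of "\<lambda>s. z i s - m0" "\<lambda>s. \<Sum>k<N. W s i k * (z k s - z i s)"])
    fix s assume s: "s \<in> {t1<..<t}" "s \<notin> E"
    then have s0: "s > 0" using t1 by auto
    have "((\<lambda>s. z i s - m0) has_real_derivative (\<Sum>k<N. W s i k * (z k s - z i s))) (at s)"
      using sol_der[OF z i s0 s(2)] by (auto intro!: derivative_eq_intros)
    moreover have "(\<Sum>k<N. W s i k * (z k s - z i s)) \<ge> W s i i * (z i s - m0) - D * (z i s - m0)"
      using zd_lower[where s=s and z=z and mm=m0 and i=i and j=i] lo s i s0 by auto
    moreover have "W s i i * (z i s - m0) \<ge> 0" using Wnn[of s i i] lo s i s0 by auto
    ultimately show "((\<lambda>s. z i s - m0) has_real_derivative (\<Sum>k<N. W s i k * (z k s - z i s))) (at s) \<and>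
        - D * (z i s - m0) \<le> (\<Sum>k<N. W s i k * (z k s - z i s))" by auto
  next
    show "continuous_on {t1..t} (\<lambda>s. z i s - m0)"
      using sol_cont[OF z i t1(1)] by (intro continuous_intros)
  qed
  moreover have "exp (- D * (t - t1)) * (z i t1 - m0) \<ge> exp (- D * (t - t1)) * \<beta>"
    using b by (intro mult_left_mono) auto
  ultimately have "exp (- D * (t - t1)) * \<beta> \<le> z i t - m0" by linarith
  then show ?thesis by (simp add: mult.commute)
qed

lemma join:
  assumes z: "sol z" and c: "0 \<le> c" and tau: "tau > 0" and lo: "\<forall>s\<ge>c. \<forall>k<N. z k s \<ge> m0"
    and i: "i < N" and j: "j < N" and wm: "\<forall>s\<in>{c<..<c+tau}. W s j i \<ge> wmin" "wmin \<ge> 0"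
    and hi: "\<forall>s\<in>{c..c+tau}. z i s - m0 \<ge> \<beta>" "\<beta> \<ge> 0"
  shows "z j (c + tau) - m0 \<ge> wmin * \<beta> / D * (1 - exp (- D * tau))"
proof -
  have ct: "c \<le> c + tau" using tau by simp
  have "z j (c + tau) - m0 - wmin * \<beta> / D \<ge> exp (- D * (c + tau - c)) * (z j c - m0 - wmin * \<beta> / D)"
  proof (rule exp_compL[OF finE ct D_pos, of "\<lambda>s. z j s - m0" "\<lambda>s. \<Sum>k<N. W s j k * (z k s - z j s)"])
    fix s assume s: "s \<in> {c<..<c+tau}" "s \<notin> E"
    then have s0: "s > 0" using c by auto
    have "((\<lambda>s. z j s - m0) has_real_derivative (\<Sum>k<N. W s j k * (z k s - z j s))) (at s)"
      using sol_der[OF z j s0 s(2)] by (auto intro!: derivative_eq_intros)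
    moreover have "(\<Sum>k<N. W s j k * (z k s - z j s)) \<ge> W s j i * (z i s - m0) - D * (z j s - m0)"
      using zd_lower[where s=s and z=z and mm=m0 and i=i and j=j] lo s i j s0 by auto
    moreover have "W s j i * (z i s - m0) \<ge> wmin * \<beta>"
    proof -
      have "W s j i \<ge> wmin" "z i s - m0 \<ge> \<beta>" using wm(1) hi(1) s by auto
      then show ?thesis using wm(2) hi(2) by (intro mult_mono) auto
    qed
    ultimately show "((\<lambda>s. z j s - m0) has_real_derivative (\<Sum>k<N. W s j k * (z k s - z j s))) (at s) \<and>
        wmin * \<beta> - D * (z j s - m0) \<le> (\<Sum>k<N. W s j k * (z k s - z j s))" by auto
  next
    show "continuous_on {c..c+tau} (\<lambda>s. z j s - m0)"
      using sol_cont[OF z j c] by (intro continuous_intros)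
  qed
  moreover have "z j c - m0 \<ge> 0" using lo j by auto
  then have "exp (- D * tau) * (z j c - m0 - wmin * \<beta> / D) \<ge> exp (- D * tau) * (- (wmin * \<beta> / D))"
    by (intro mult_left_mono) auto
  ultimately have "z j (c + tau) - m0 \<ge> wmin * \<beta> / D - exp (- D * tau) * (wmin * \<beta> / D)"
    by simp
  then show ?thesis by (simp add: algebra_simps)
qed

end




lemma reach_cross:
  assumes "(r, b) \<in> R\<^sup>*" "r \<in> A" "b \<notin> A"
  shows "\<exists>i j. (i, j) \<in> R \<and> i \<in> A \<and> j \<notin> A"
  using assms
proof (induction rule: rtrancl_induct)
  case base then show ?case by simp
next
  case (step y b)
  then show ?case by (cases "y \<in> A") auto
qed

lemma exp_neg_mono: "(K::real) > 0 \<Longrightarrow> x \<le> y \<Longrightarrow> exp (- K * y) \<le> exp (- K * x)"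
  by simp

locale cons_graph = cons_sys +
  fixes wmin tau T :: real
  assumes wmin: "wmin > 0" and tau: "tau > 0" and T: "T > 0"
    and conn: "\<And>s. s \<ge> tau \<Longrightarrow> \<exists>r<N. \<forall>b<N. (r, b) \<in> {(i, j). i < N \<and> j < N \<and>
        (\<exists>c. s - tau \<le> c \<and> c + tau \<le> s + T + tau \<and> (\<forall>u\<in>{c<..<c+tau}. W u j i \<ge> wmin))}\<^sup>*"
begin

definition P where "P = T + 2 * tau"
definition rho where "rho = exp (- 2 * D * P) * min 1 (wmin * (1 - exp (- D * tau)) / D)"

lemma P_pos: "P > 0" using T tau by (simp add: P_def)

lemma rho_pos: "rho > 0"
proof -
  have "exp (- D * tau) < 1" using D_pos tau by simp
  then have "wmin * (1 - exp (- D * tau)) / D > 0" using wmin D_pos by simp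
  then show ?thesis by (simp add: rho_def)
qed

lemma rho_le: "rho \<le> exp (- D * P)"
proof -
  have "rho \<le> exp (- 2 * D * P) * 1" unfolding rho_def by (intro mult_left_mono) auto
  also have "\<dots> \<le> exp (- D * P)"
  proof -
    have "D * P > 0" by (rule mult_pos_pos[OF D_pos P_pos])
    then have "- 2 * D * P \<le> - D * P" by linarith
    then show ?thesis by simp
  qed
  finally show ?thesis .
qed

lemma rho_le1: "rho \<le> 1"
proof -
  have "D * P > 0" by (rule mult_pos_pos[OF D_pos P_pos])
  then have "exp (- D * P) \<le> 1" by simp
  then show ?thesis using rho_le by linarith
qed

lemma keep:
  assumes z: "sol z" and s0: "0 \<le> s0" and lo: "\<forall>s\<ge>s0. \<forall>k<N. z k s \<ge> m0"
    and i: "i < N" and b: "z i s0 - m0 \<ge> \<eta>" "\<eta> \<ge> 0"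
  shows "z i (s0 + P) - m0 \<ge> rho * \<eta>"
proof -
  have "z i (s0 + P) - m0 \<ge> \<eta> * exp (- D * (s0 + P - s0))"
    by (rule decay[OF z s0 _ lo i b]) (use P_pos in linarith)
  then have "z i (s0 + P) - m0 \<ge> \<eta> * exp (- D * P)" by simp
  moreover have "rho * \<eta> \<le> exp (- D * P) * \<eta>" using rho_le b(2) by (rule mult_right_mono)
  ultimately show ?thesis by (simp add: mult.commute)
qed

lemma window:
  assumes z: "sol z" and s0: "0 \<le> s0" and lo: "\<forall>s\<ge>s0. \<forall>k<N. z k s \<ge> m0"
    and i: "i < N" and j: "j < N" and b: "z i s0 - m0 \<ge> \<eta>" "\<eta> \<ge> 0"
    and cw: "s0 + tau - tau \<le> c" "c + tau \<le> s0 + tau + T + tau" "\<forall>u\<in>{c<..<c+tau}. W u j i \<ge> wmin"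
  shows "z j (s0 + P) - m0 \<ge> rho * \<eta>"
proof -
  have c0: "s0 \<le> c" "c + tau \<le> s0 + P" using cw by (auto simp: P_def)
  define \<beta> where "\<beta> = \<eta> * exp (- D * P)"
  have \<beta>0: "\<beta> \<ge> 0" using b by (simp add: \<beta>_def)
  have hi: "\<forall>u\<in>{c..c+tau}. z i u - m0 \<ge> \<beta>"
  proof
    fix u assume u: "u \<in> {c..c+tau}"
    have "z i u - m0 \<ge> \<eta> * exp (- D * (u - s0))"
      by (rule decay[OF z s0 _ lo i b]) (use u c0 in auto)
    moreover have "exp (- D * P) \<le> exp (- D * (u - s0))"
      by (rule exp_neg_mono[OF D_pos]) (use u c0 in auto)
    then have "\<eta> * exp (- D * P) \<le> \<eta> * exp (- D * (u - s0))"
      using b by (intro mult_left_mono) auto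
    ultimately show "z i u - m0 \<ge> \<beta>" by (simp add: \<beta>_def)
  qed
  have c00: "0 \<le> c" using c0 s0 by simp
  have lo': "\<forall>s\<ge>c. \<forall>k<N. z k s \<ge> m0" using lo c0 by auto
  define g where "g = wmin * \<beta> / D * (1 - exp (- D * tau))"
  have e1: "exp (- D * tau) \<le> 1" using D_pos tau by simp
  have g0: "g \<ge> 0" unfolding g_def using wmin \<beta>0 D_pos e1 by simp
  have 1: "z j (c + tau) - m0 \<ge> g"
    unfolding g_def by (rule join[OF z c00 tau lo' i j cw(3) _ hi \<beta>0]) (use wmin in simp)
  have "z j (s0 + P) - m0 \<ge> g * exp (- D * (s0 + P - (c + tau)))"
    by (rule decay[OF z _ _ _ j 1 g0]) (use c0 c00 tau lo in auto)
  moreover have "exp (- D * P) \<le> exp (- D * (s0 + P - (c + tau)))"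
    by (rule exp_neg_mono[OF D_pos]) (use c0 tau in auto)
  then have "g * exp (- D * P) \<le> g * exp (- D * (s0 + P - (c + tau)))"
    using g0 by (intro mult_left_mono) auto
  moreover have "rho * \<eta> \<le> g * exp (- D * P)"
  proof -
    have "g * exp (- D * P) = \<eta> * (exp (- D * P) * exp (- D * P)) * (wmin * (1 - exp (- D * tau)) / D)"
      unfolding g_def \<beta>_def by (simp only: times_divide_eq_left times_divide_eq_right mult_ac)
    also have "exp (- D * P) * exp (- D * P) = exp (- 2 * D * P)"
      by (simp add: exp_add[symmetric])
    finally have "g * exp (- D * P) = \<eta> * exp (- 2 * D * P) * (wmin * (1 - exp (- D * tau)) / D)" .
    moreover have "rho * \<eta> \<le> \<eta> * exp (- 2 * D * P) * (wmin * (1 - exp (- D * tau)) / D)"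
    proof -
      have "rho * \<eta> = (\<eta> * exp (- 2 * D * P)) * min 1 (wmin * (1 - exp (- D * tau)) / D)"
        unfolding rho_def by (simp only: mult_ac)
      also have "\<dots> \<le> (\<eta> * exp (- 2 * D * P)) * (wmin * (1 - exp (- D * tau)) / D)"
        by (rule mult_left_mono) (use b(2) in auto)
      finally show ?thesis .
    qed
    ultimately show ?thesis by simp
  qed
  ultimately show ?thesis by linarith
qed

end




context cons_sys begin

definition Mx where "Mx z t = Max ((\<lambda>i. z i t) ` {..<N})"
definition Mn where "Mn z t = Min ((\<lambda>i. z i t) ` {..<N})"

lemma ne: "{..<N} \<noteq> {}"
proof -
  have "0 \<in> {..<N}" using N1 by simp
  then show ?thesis by blast
qed

lemma Mn_le: "i < N \<Longrightarrow> Mn z t \<le> z i t"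
  unfolding Mn_def by (rule Min_le) auto

lemma Mx_ge: "i < N \<Longrightarrow> z i t \<le> Mx z t"
  unfolding Mx_def by (rule Max_ge) auto

lemma Mn_ge: "(\<And>i. i < N \<Longrightarrow> c \<le> z i t) \<Longrightarrow> c \<le> Mn z t"
  unfolding Mn_def using ne by (subst Min_ge_iff) auto

lemma Mx_le: "(\<And>i. i < N \<Longrightarrow> z i t \<le> c) \<Longrightarrow> Mx z t \<le> c"
  unfolding Mx_def using ne by (subst Max_le_iff) auto

lemma Mn_Mx: "Mn z t \<le> Mx z t"
  using Mn_le[of 0 z t] Mx_ge[of 0 z t] N1 by auto

lemma lo_inv: "sol z \<Longrightarrow> 0 \<le> t0 \<Longrightarrow> t0 \<le> t \<Longrightarrow> i < N \<Longrightarrow> Mn z t0 \<le> z i t"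
  by (rule inv_lower) (auto intro: Mn_le)

lemma hi_inv: "sol z \<Longrightarrow> 0 \<le> t0 \<Longrightarrow> t0 \<le> t \<Longrightarrow> i < N \<Longrightarrow> z i t \<le> Mx z t0"
  by (rule inv_upper) (auto intro: Mx_ge)

lemma Mn_mono: "sol z \<Longrightarrow> 0 \<le> t0 \<Longrightarrow> t0 \<le> t \<Longrightarrow> Mn z t0 \<le> Mn z t"
  by (rule Mn_ge) (rule lo_inv)

lemma Mx_mono: "sol z \<Longrightarrow> 0 \<le> t0 \<Longrightarrow> t0 \<le> t \<Longrightarrow> Mx z t \<le> Mx z t0"
  by (rule Mx_le) (rule hi_inv)

end

context cons_graph begin

lemma contract:
  assumes z: "sol z" and t0: "0 \<le> t0"
  shows "Mx z (t0 + real N * P) - Mn z (t0 + real N * P) \<le> (1 - rho ^ N / 2) * (Mx z t0 - Mn z t0)"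
proof -
  define m0 where "m0 = Mn z t0"
  define M0 where "M0 = Mx z t0"
  define \<Delta> where "\<Delta> = M0 - m0"
  have \<Delta>0: "\<Delta> \<ge> 0" using Mn_Mx[of z t0] by (simp add: \<Delta>_def m0_def M0_def)
  have lo: "\<forall>s\<ge>t0. \<forall>k<N. z k s \<ge> m0" using lo_inv[OF z t0] by (auto simp: m0_def)
  have hi: "\<forall>s\<ge>t0. \<forall>k<N. - z k s \<ge> - M0" using hi_inv[OF z t0] by (auto simp: M0_def)
  have nz: "sol (\<lambda>i t. - z i t)" by (rule sol_neg[OF z])
  have claim: "\<exists>Glo Ghi. Glo \<subseteq> {..<N} \<and> Ghi \<subseteq> {..<N} \<and> Glo \<union> Ghi = {..<N} \<and>
      (Glo = {..<N} \<or> Ghi = {..<N} \<or> N + k \<le> card Glo + card Ghi) \<and>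
      (\<forall>i\<in>Glo. z i (t0 + real k * P) - m0 \<ge> rho ^ k * (\<Delta> / 2)) \<and>
      (\<forall>i\<in>Ghi. - z i (t0 + real k * P) - - M0 \<ge> rho ^ k * (\<Delta> / 2))" if "k \<le> N" for k
    using that
  proof (induction k)
    case 0
    define Glo where "Glo = {i. i < N \<and> z i t0 \<ge> m0 + \<Delta> / 2}"
    define Ghi where "Ghi = {i. i < N \<and> z i t0 \<le> m0 + \<Delta> / 2}"
    have U: "Glo \<union> Ghi = {..<N}" by (auto simp: Glo_def Ghi_def)
    have "card (Glo \<union> Ghi) \<le> card Glo + card Ghi" by (rule card_Un_le)
    then have "N + 0 \<le> card Glo + card Ghi" using U by simp
    moreover have "\<forall>i\<in>Glo. z i (t0 + real 0 * P) - m0 \<ge> rho ^ 0 * (\<Delta> / 2)" by (auto simp: Glo_def)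
    moreover have "\<forall>i\<in>Ghi. - z i (t0 + real 0 * P) - - M0 \<ge> rho ^ 0 * (\<Delta> / 2)"
    proof
      fix i assume "i \<in> Ghi"
      then have "z i t0 \<le> m0 + \<Delta> / 2" by (simp add: Ghi_def)
      then have h: "z i t0 \<le> m0 + (M0 - m0) / 2" by (simp add: \<Delta>_def)
      have "M0 - z i t0 \<ge> (M0 - m0) / 2" using h by (simp add: field_simps)
      then show "- z i (t0 + real 0 * P) - - M0 \<ge> rho ^ 0 * (\<Delta> / 2)" by (simp add: \<Delta>_def)
    qed
    moreover have "Glo \<subseteq> {..<N}" "Ghi \<subseteq> {..<N}" by (auto simp: Glo_def Ghi_def)
    ultimately show ?case using U by blast
  next
    case (Suc k)
    then obtain Glo Ghi where G: "Glo \<subseteq> {..<N}" "Ghi \<subseteq> {..<N}" "Glo \<union> Ghi = {..<N}"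
      "Glo = {..<N} \<or> Ghi = {..<N} \<or> N + k \<le> card Glo + card Ghi"
      "\<forall>i\<in>Glo. z i (t0 + real k * P) - m0 \<ge> rho ^ k * (\<Delta> / 2)"
      "\<forall>i\<in>Ghi. - z i (t0 + real k * P) - - M0 \<ge> rho ^ k * (\<Delta> / 2)" by auto
    define s0 where "s0 = t0 + real k * P"
    have s0: "0 \<le> s0" "t0 \<le> s0" using t0 P_pos by (auto simp: s0_def)
    have sP: "t0 + real (Suc k) * P = s0 + P" by (simp add: s0_def algebra_simps)
    define \<eta> where "\<eta> = rho ^ k * (\<Delta> / 2)"
    have \<eta>0: "\<eta> \<ge> 0" using rho_pos \<Delta>0 by (simp add: \<eta>_def)
    have rs: "rho ^ Suc k * (\<Delta> / 2) = rho * \<eta>" by (simp add: \<eta>_def)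
    have lo0: "\<forall>s\<ge>s0. \<forall>kk<N. z kk s \<ge> m0" using lo s0 by auto
    have hi0: "\<forall>s\<ge>s0. \<forall>kk<N. - z kk s \<ge> - M0" using hi s0 by auto
    have Klo: "\<forall>i\<in>Glo. z i (s0 + P) - m0 \<ge> rho * \<eta>"
    proof
      fix i assume i: "i \<in> Glo"
      then have i': "i < N" using G(1) by auto
      have "z i s0 - m0 \<ge> \<eta>" using G(5) i by (simp add: s0_def \<eta>_def)
      then show "z i (s0 + P) - m0 \<ge> rho * \<eta>" by (rule keep[OF z s0(1) lo0 i' _ \<eta>0])
    qed
    have Khi: "\<forall>i\<in>Ghi. - z i (s0 + P) - - M0 \<ge> rho * \<eta>"
    proof
      fix i assume i: "i \<in> Ghi"
      then have i': "i < N" using G(2) by auto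
      have "- z i s0 - - M0 \<ge> \<eta>" using G(6) i by (simp add: s0_def \<eta>_def)
      then show "- z i (s0 + P) - - M0 \<ge> rho * \<eta>" by (rule keep[OF nz s0(1) hi0 i' _ \<eta>0])
    qed
    have finlo: "finite Glo" and finhi: "finite Ghi" using G(1,2) finite_subset by auto
    show ?case
    proof (cases "Glo = {..<N} \<or> Ghi = {..<N}")
      case True
      then show ?thesis using G(1-3) Klo Khi unfolding sP rs by blast
    next
      case False
      then have cardk: "N + k \<le> card Glo + card Ghi" using G(4) by auto
      obtain r where r: "r < N" "\<forall>b<N. (r, b) \<in> {(i, j). i < N \<and> j < N \<and>
        (\<exists>c. s0 + tau - tau \<le> c \<and> c + tau \<le> s0 + tau + T + tau \<and> (\<forall>u\<in>{c<..<c+tau}. W u j i \<ge> wmin))}\<^sup>*"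
        using conn[of "s0 + tau"] s0 by auto
      show ?thesis
      proof (cases "r \<in> Glo")
        case True
        obtain b where b: "b < N" "b \<notin> Glo" using False G(1) by auto
        from reach_cross[OF r(2)[rule_format, OF b(1)] True b(2)] obtain i j c where
          ij: "i \<in> Glo" "j \<notin> Glo" "i < N" "j < N" "s0 + tau - tau \<le> c" "c + tau \<le> s0 + tau + T + tau"
          "\<forall>u\<in>{c<..<c+tau}. W u j i \<ge> wmin" by blast
        have new: "z j (s0 + P) - m0 \<ge> rho * \<eta>"
          by (rule window[OF z s0(1) lo0 ij(3,4) _ \<eta>0 ij(5,6,7)]) (use G(5) ij(1) in \<open>auto simp: s0_def \<eta>_def\<close>)
        have "card (insert j Glo) = Suc (card Glo)" using finlo ij(2) by simp
        then have "N + Suc k \<le> card (insert j Glo) + card Ghi" using cardk by simp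
        moreover have "insert j Glo \<subseteq> {..<N}" using G(1) ij(4) by auto
        moreover have "insert j Glo \<union> Ghi = {..<N}" using G(3) ij(4) by auto
        ultimately show ?thesis using G(2) Klo Khi new unfolding sP rs
          by (intro exI[of _ "insert j Glo"] exI[of _ Ghi]) auto
      next
        case False
        then have rh: "r \<in> Ghi" using G(3) r(1) by auto
        obtain b where b: "b < N" "b \<notin> Ghi" using \<open>\<not> (Glo = {..<N} \<or> Ghi = {..<N})\<close> G(2) by auto
        from reach_cross[OF r(2)[rule_format, OF b(1)] rh b(2)] obtain i j c where
          ij: "i \<in> Ghi" "j \<notin> Ghi" "i < N" "j < N" "s0 + tau - tau \<le> c" "c + tau \<le> s0 + tau + T + tau"
          "\<forall>u\<in>{c<..<c+tau}. W u j i \<ge> wmin" by blast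
        have new: "- z j (s0 + P) - - M0 \<ge> rho * \<eta>"
          by (rule window[OF nz s0(1) hi0 ij(3,4) _ \<eta>0 ij(5,6,7)]) (use G(6) ij(1) in \<open>auto simp: s0_def \<eta>_def\<close>)
        have "card (insert j Ghi) = Suc (card Ghi)" using finhi ij(2) by simp
        then have "N + Suc k \<le> card Glo + card (insert j Ghi)" using cardk by simp
        moreover have "insert j Ghi \<subseteq> {..<N}" using G(2) ij(4) by auto
        moreover have "Glo \<union> insert j Ghi = {..<N}" using G(3) ij(4) by auto
        ultimately show ?thesis using G(1) Klo Khi new unfolding sP rs
          by (intro exI[of _ Glo] exI[of _ "insert j Ghi"]) auto
      qed
    qed
  qed
  obtain Glo Ghi where G: "Glo \<subseteq> {..<N}" "Ghi \<subseteq> {..<N}"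
      "Glo = {..<N} \<or> Ghi = {..<N} \<or> N + N \<le> card Glo + card Ghi"
      "\<forall>i\<in>Glo. z i (t0 + real N * P) - m0 \<ge> rho ^ N * (\<Delta> / 2)"
      "\<forall>i\<in>Ghi. - z i (t0 + real N * P) - - M0 \<ge> rho ^ N * (\<Delta> / 2)"
    using claim[of N] by auto
  define tN where "tN = t0 + real N * P"
  have tN: "0 \<le> tN" "t0 \<le> tN" using t0 P_pos by (auto simp: tN_def)
  have "Glo = {..<N} \<or> Ghi = {..<N}"
  proof (rule ccontr)
    assume n: "\<not> (Glo = {..<N} \<or> Ghi = {..<N})"
    have "card Glo \<le> N" "card Ghi \<le> N" using card_mono[OF _ G(1)] card_mono[OF _ G(2)] by auto
    then have "card Glo = card {..<N}" using G(3) n by auto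
    then have "Glo = {..<N}" using card_subset_eq[OF _ G(1)] by auto
    then show False using n by auto
  qed
  then show ?thesis
  proof
    assume "Glo = {..<N}"
    then have "Mn z tN \<ge> m0 + rho ^ N * (\<Delta> / 2)"
    proof (intro Mn_ge)
      fix i assume "Glo = {..<N}" "i < N"
      then have "i \<in> Glo" by simp
      then have "z i tN - m0 \<ge> rho ^ N * (\<Delta> / 2)" using G(4) unfolding tN_def by blast
      then show "m0 + rho ^ N * (\<Delta> / 2) \<le> z i tN" by linarith
    qed
    moreover have "Mx z tN \<le> M0" unfolding M0_def by (rule Mx_mono[OF z t0 tN(2)])
    ultimately show ?thesis by (simp add: tN_def[symmetric] M0_def[symmetric] m0_def[symmetric]
        \<Delta>_def algebra_simps)
  next
    assume "Ghi = {..<N}"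
    then have "Mx z tN \<le> M0 - rho ^ N * (\<Delta> / 2)"
    proof (intro Mx_le)
      fix i assume "Ghi = {..<N}" "i < N"
      then have "i \<in> Ghi" by simp
      then have "- z i tN - - M0 \<ge> rho ^ N * (\<Delta> / 2)" using G(5) unfolding tN_def by blast
      then show "z i tN \<le> M0 - rho ^ N * (\<Delta> / 2)" by linarith
    qed
    moreover have "Mn z tN \<ge> m0" unfolding m0_def by (rule Mn_mono[OF z t0 tN(2)])
    ultimately show ?thesis by (simp add: tN_def[symmetric] M0_def[symmetric] m0_def[symmetric]
        \<Delta>_def algebra_simps)
  qed
qed

end




context cons_graph begin

lemma consensus:
  assumes z: "sol z"
  shows "\<exists>zs. \<forall>i<N. (z i \<longlongrightarrow> zs) at_top"
proof -
  define L where "L = real N * P"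
  have L: "L > 0" using N1 P_pos by (simp add: L_def)
  define \<gamma> where "\<gamma> = 1 - rho ^ N / 2"
  have rN: "rho ^ N > 0" "rho ^ N \<le> 1" using rho_pos rho_le1 by (auto intro: power_le_one)
  have \<gamma>: "\<gamma> \<ge> 0" "\<gamma> < 1" using rN by (auto simp: \<gamma>_def)
  define sp where "sp t = Mx z t - Mn z t" for t
  have sp0: "sp t \<ge> 0" for t using Mn_Mx[of z t] by (simp add: sp_def)
  have spj: "sp (real j * L) \<le> \<gamma> ^ j * sp 0" for j
  proof (induction j)
    case 0 then show ?case by simp
  next
    case (Suc j)
    have t: "0 \<le> real j * L" using L by simp
    have "sp (real (Suc j) * L) = sp (real j * L + real N * P)" by (simp add: L_def algebra_simps)
    also have "\<dots> \<le> \<gamma> * sp (real j * L)" unfolding sp_def \<gamma>_def by (rule contract[OF z t])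
    also have "\<dots> \<le> \<gamma> * (\<gamma> ^ j * sp 0)" using Suc \<gamma> by (intro mult_left_mono) auto
    finally show ?case by simp
  qed
  define zs where "zs = Sup (Mn z ` {0..})"
  have bdd: "bdd_above (Mn z ` {0..})"
  proof (rule bdd_aboveI)
    fix x assume "x \<in> Mn z ` {0..}"
    then obtain t where "t \<ge> 0" "x = Mn z t" by auto
    then show "x \<le> Mx z 0" using Mn_Mx[of z t] Mx_mono[OF z, of 0 t] by auto
  qed
  have zs_lo: "Mn z t1 \<le> zs" if "t1 \<ge> 0" for t1
    unfolding zs_def by (rule cSup_upper[OF _ bdd]) (use that in auto)
  have zs_hi: "zs \<le> Mx z t1" if t1: "t1 \<ge> 0" for t1
    unfolding zs_def
  proof (rule cSup_least)
    show "Mn z ` {0..} \<noteq> {}" by auto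
    fix x assume "x \<in> Mn z ` {0..}"
    then obtain t where t: "t \<ge> 0" "x = Mn z t" by auto
    show "x \<le> Mx z t1"
    proof (cases "t \<le> t1")
      case True
      then show ?thesis using t Mn_mono[OF z t(1) True] Mn_Mx[of z t1] by auto
    next
      case False
      then show ?thesis using t Mx_mono[OF z t1, of t] Mn_Mx[of z t] by auto
    qed
  qed
  have "(z i \<longlongrightarrow> zs) at_top" if i: "i < N" for i
  proof (rule tendstoI)
    fix e :: real assume e: "e > 0"
    obtain j where j: "\<gamma> ^ j < e / (sp 0 + 1)"
      using real_arch_pow_inv[of "e / (sp 0 + 1)" \<gamma>] e sp0[of 0] \<gamma> by auto
    define t1 where "t1 = real j * L"
    have t1: "t1 \<ge> 0" using L by (simp add: t1_def)
    have "\<gamma> ^ j * sp 0 \<le> e / (sp 0 + 1) * sp 0"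
      using j sp0[of 0] by (intro mult_right_mono) auto
    also have "\<dots> < e"
      using e sp0[of 0] by (simp add: field_simps)
    finally have spt1: "sp t1 < e" using spj[of j] by (simp add: t1_def)
    have "eventually (\<lambda>t. t \<ge> t1) at_top" by (rule eventually_ge_at_top)
    then show "eventually (\<lambda>t. dist (z i t) zs < e) at_top"
    proof eventually_elim
      case (elim t)
      have "Mn z t1 \<le> z i t" using lo_inv[OF z t1 elim i] .
      moreover have "z i t \<le> Mx z t1" using hi_inv[OF z t1 elim i] .
      moreover note zs_lo[OF t1] zs_hi[OF t1]
      ultimately show ?case using spt1 by (simp add: dist_real_def sp_def abs_le_iff)
    qed
  qed
  then show ?thesis by blast
qed

end




lemma ts_ge:
  assumes "dwell_time_switching S \<sigma> ts tauD"
  shows "ts n \<ge> real n * tauD"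
proof (induction n)
  case 0 then show ?case using assms by (simp add: dwell_time_switching_def)
next
  case (Suc n)
  have "ts (Suc n) - ts n \<ge> tauD" using assms by (simp add: dwell_time_switching_def)
  then show ?case using Suc by (simp add: algebra_simps)
qed

lemma ts_fin:
  assumes d: "dwell_time_switching S \<sigma> ts tauD"
  shows "finite (range ts \<inter> {a..b})"
proof -
  have tau: "tauD > 0" using d by (simp add: dwell_time_switching_def)
  have "range ts \<inter> {a..b} \<subseteq> ts ` {..nat \<lceil>b / tauD\<rceil>}"
  proof
    fix x assume "x \<in> range ts \<inter> {a..b}"
    then obtain n where n: "x = ts n" "ts n \<le> b" by auto
    have "real n * tauD \<le> b" using ts_ge[OF d, of n] n by simp
    then have "real n \<le> b / tauD" using tau by (simp add: pos_le_divide_eq)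
    then have "n \<le> nat \<lceil>b / tauD\<rceil>" by linarith
    then show "x \<in> ts ` {..nat \<lceil>b / tauD\<rceil>}" using n by auto
  qed
  then show ?thesis by (rule finite_subset) simp
qed

lemma ts_interval:
  assumes d: "dwell_time_switching S \<sigma> ts tauD" and t: "t \<ge> 0"
  shows "\<exists>n. ts n \<le> t \<and> t < ts (Suc n)"
proof -
  have tau: "tauD > 0" and ts0: "ts 0 = 0" using d by (auto simp: dwell_time_switching_def)
  define A where "A = {n. ts n \<le> t}"
  have "A \<subseteq> {..nat \<lceil>t / tauD\<rceil>}"
  proof
    fix n assume "n \<in> A"
    then have "real n * tauD \<le> t" using ts_ge[OF d, of n] by (simp add: A_def)
    then have "real n \<le> t / tauD" using tau by (simp add: pos_le_divide_eq)
    then show "n \<in> {..nat \<lceil>t / tauD\<rceil>}" by simp linarith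
  qed
  then have fin: "finite A" by (rule finite_subset) simp
  have ne: "0 \<in> A" using ts0 t by (simp add: A_def)
  define n where "n = Max A"
  have "n \<in> A" unfolding n_def using fin ne by (intro Max_in) auto
  moreover have "Suc n \<notin> A" using Max_ge[OF fin, of "Suc n"] n_def by auto
  ultimately show ?thesis by (auto simp: A_def)
qed




lemma intA_sum: "(\<Sum>d<m. intA m c d * v d) = (if c + 1 < m then v (c+1) else 0)"
proof -
  have "(\<Sum>d<m. intA m c d * v d) = (\<Sum>d<m. if d = c + 1 then (if c + 1 < m then v (c+1) else 0) else 0)"
    by (rule sum.cong) (auto simp: intA_def)
  also have "\<dots> = (if c + 1 < m then v (c+1) else 0)" by (simp add: sum.delta)
  finally show ?thesis .
qed

lemma K2_dyn:
  assumes "m = Suc n"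
  shows "(\<Sum>c<m. gainK2 a m c * ((\<Sum>d<m. intA m c d * v d) + intB m c * u)) = (\<Sum>c<n. a (c+1) * v (c+1)) + u"
proof -
  have "(\<Sum>c<m. gainK2 a m c * ((\<Sum>d<m. intA m c d * v d) + intB m c * u))
      = (\<Sum>c<n. gainK2 a m c * ((\<Sum>d<m. intA m c d * v d) + intB m c * u))
        + gainK2 a m n * ((\<Sum>d<m. intA m n d * v d) + intB m n * u)"
    using assms by simp
  also have "(\<Sum>c<n. gainK2 a m c * ((\<Sum>d<m. intA m c d * v d) + intB m c * u)) = (\<Sum>c<n. a (c+1) * v (c+1))"
    by (rule sum.cong) (use assms in \<open>auto simp: intA_sum gainK2_def intB_def\<close>)
  also have "gainK2 a m n * ((\<Sum>d<m. intA m n d * v d) + intB m n * u) = u"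
    using assms by (simp add: intA_sum gainK2_def intB_def)
  finally show ?thesis .
qed

lemma K1_sum: "(\<Sum>c<Suc n. gainK1 a c * v c) = - (\<Sum>c<n. a (c+1) * v (c+1))"
  by (subst sum.lessThan_Suc_shift) (simp add: gainK1_def sum_negf)

lemma K2_split:
  assumes "m = Suc n"
  shows "(\<Sum>c<m. gainK2 a m c * v c) = (\<Sum>c<n. a (c+1) * v c) + v n"
proof -
  have "(\<Sum>c<m. gainK2 a m c * v c) = (\<Sum>c<n. gainK2 a m c * v c) + gainK2 a m n * v n"
    using assms by simp
  also have "(\<Sum>c<n. gainK2 a m c * v c) = (\<Sum>c<n. a (c+1) * v c)"
    by (rule sum.cong) (use assms in \<open>auto simp: gainK2_def\<close>)
  finally show ?thesis using assms by (simp add: gainK2_def)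
qed

definition cpoly :: "(nat \<Rightarrow> real) \<Rightarrow> nat \<Rightarrow> complex poly" where
  "cpoly a n = monom 1 n + (\<Sum>k<n. monom (complex_of_real (a (k+1))) k)"

lemma coeff_cpoly: "coeff (cpoly a n) j = (if j = n then 1 else if j < n then complex_of_real (a (j+1)) else 0)"
  by (simp add: cpoly_def coeff_sum sum.delta)

lemma degree_cpoly: "degree (cpoly a n) = n"
proof (rule antisym)
  show "degree (cpoly a n) \<le> n" by (rule degree_le) (auto simp: coeff_cpoly)
  show "n \<le> degree (cpoly a n)" by (rule le_degree) (simp add: coeff_cpoly)
qed

lemma lead_cpoly: "lead_coeff (cpoly a n) = 1"
  by (simp add: degree_cpoly coeff_cpoly)

lemma poly_cpoly: "poly (cpoly a n) z = z ^ n + (\<Sum>k<n. complex_of_real (a (k+1)) * z ^ k)"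
  by (simp add: cpoly_def poly_sum poly_monom)




lemma cl_deriv:
  assumes cl: "closed_loop_solution N m a w \<sigma> ts x" and i: "i < N" and c: "c < m"
    and t: "t > 0" "t \<notin> range ts"
  shows "((\<lambda>s. x i s c) has_real_derivative
           ((\<Sum>d<m. intA m c d * x i t d) + intB m c * protocol N m a w \<sigma> x i t)) (at t)"
proof -
  have "((\<lambda>s. x i s c) has_real_derivative
           ((\<Sum>d<m. intA m c d * x i t d) + intB m c * protocol N m a w \<sigma> x i t)) (at t within {0..})"
    using cl i c t unfolding closed_loop_solution_def by auto
  moreover have "at t within {0..} = at t" using t by (intro at_within_interior) simp
  ultimately show ?thesis by simp
qed

lemma z_deriv:
  assumes m: "m = Suc n" and cl: "closed_loop_solution N m a w \<sigma> ts x" and i: "i < N"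
    and t: "t > 0" "t \<notin> range ts" and wnn: "\<forall>j. w (\<sigma> t) i j \<ge> 0"
  shows "((\<lambda>t. \<Sum>c<m. gainK2 a m c * x i t c) has_real_derivative
     (\<Sum>j<N. w (\<sigma> t) i j * ((\<Sum>c<m. gainK2 a m c * x j t c) - (\<Sum>c<m. gainK2 a m c * x i t c)))) (at t)"
proof -
  define u where "u = protocol N m a w \<sigma> x i t"
  define zz where "zz j = (\<Sum>c<m. gainK2 a m c * x j t c)" for j
  have "((\<lambda>t. \<Sum>c<m. gainK2 a m c * x i t c) has_real_derivative
     (\<Sum>c<m. gainK2 a m c * ((\<Sum>d<m. intA m c d * x i t d) + intB m c * u))) (at t)"
    unfolding u_def by (intro DERIV_sum DERIV_cmult cl_deriv[OF cl i _ t]) auto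
  moreover have "(\<Sum>c<m. gainK2 a m c * ((\<Sum>d<m. intA m c d * x i t d) + intB m c * u))
      = (\<Sum>c<n. a (c+1) * x i t (c+1)) + u" by (rule K2_dyn[OF m])
  moreover have "u = - (\<Sum>c<n. a (c+1) * x i t (c+1))
      - (\<Sum>j\<in>neighbors N w (\<sigma> t) i. w (\<sigma> t) i j * (zz i - zz j))"
  proof -
    have "(\<Sum>c<m. gainK1 a c * x i t c) = - (\<Sum>c<n. a (c+1) * x i t (c+1))"
      unfolding m by (rule K1_sum)
    moreover have "(\<Sum>c<m. gainK2 a m c * (x i t c - x j t c)) = zz i - zz j" for j
      by (simp add: zz_def sum_subtractf[symmetric] right_diff_distrib)
    ultimately show ?thesis by (simp add: u_def protocol_def)
  qed
  moreover have "(\<Sum>j\<in>neighbors N w (\<sigma> t) i. w (\<sigma> t) i j * (zz i - zz j))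
      = (\<Sum>j<N. w (\<sigma> t) i j * (zz i - zz j))"
  proof (rule sum.mono_neutral_left)
    show "neighbors N w (\<sigma> t) i \<subseteq> {..<N}" by (auto simp: neighbors_def)
    show "\<forall>j\<in>{..<N} - neighbors N w (\<sigma> t) i. w (\<sigma> t) i j * (zz i - zz j) = 0"
      using wnn by (auto simp: neighbors_def) (metis order_le_less)
  qed simp
  moreover have "- (\<Sum>j<N. w (\<sigma> t) i j * (zz i - zz j)) = (\<Sum>j<N. w (\<sigma> t) i j * (zz j - zz i))"
    by (simp add: sum_negf[symmetric] algebra_simps)
  ultimately show ?thesis by (simp add: zz_def)
qed

lemma agent_conv:
  assumes m: "m = Suc n" "n \<ge> 1" and cl: "closed_loop_solution N m a w \<sigma> ts x" and i: "i < N"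
    and roots: "\<forall>z::complex. z ^ (m - 1) + (\<Sum>k<m - 1. complex_of_real (a (k + 1)) * z ^ k) = 0 \<longrightarrow> Re z < 0"
    and a1: "a 1 \<noteq> 0"
    and zlim: "((\<lambda>t. \<Sum>c<m. gainK2 a m c * x i t c) \<longlongrightarrow> zs) at_top"
    and fin: "\<And>a b. finite (range ts \<inter> {a..b})"
  shows "\<forall>c<m. ((\<lambda>t. x i t c) \<longlongrightarrow> (if c = 0 then zs / a 1 else 0)) at_top"
proof -
  define \<delta> :: "nat \<Rightarrow> real" where "\<delta> k = (if k = 0 then zs / a 1 else 0)" for k
  define y where "y k t = complex_of_real (x i t k - \<delta> k)" for k t
  define zt where "zt t = (\<Sum>c<m. gainK2 a m c * x i t c)" for t
  define r where "r t = complex_of_real (zt t - zs)" for t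
  have n1: "m - 1 = n" using m by simp
  have sd: "(\<Sum>k<n. a (k+1) * \<delta> k) = zs"
  proof -
    have "(\<Sum>k<n. a (k+1) * \<delta> k) = (\<Sum>k<n. if k = 0 then a 1 * (zs / a 1) else 0)"
      by (rule sum.cong) (auto simp: \<delta>_def)
    also have "\<dots> = zs" using m a1 by (simp add: sum.delta)
    finally show ?thesis .
  qed
  have ztsplit: "zt t = (\<Sum>k<n. a (k+1) * x i t k) + x i t n" for t
    unfolding zt_def by (rule K2_split[OF m(1)])
  have xd: "((\<lambda>s. x i s k) has_real_derivative x i t (k+1)) (at t)"
    if "k + 1 < m" "t > 0" "t \<notin> range ts" for k t
  proof -
    have "((\<lambda>s. x i s k) has_real_derivative
           ((\<Sum>d<m. intA m k d * x i t d) + intB m k * protocol N m a w \<sigma> x i t)) (at t)"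
      by (rule cl_deriv[OF cl i _ that(2,3)]) (use that in simp)
    moreover have "(\<Sum>d<m. intA m k d * x i t d) + intB m k * protocol N m a w \<sigma> x i t = x i t (k+1)"
      using that by (simp add: intA_sum intB_def)
    ultimately show ?thesis by simp
  qed
  have yd: "(y k has_vector_derivative complex_of_real (x i t (k+1))) (at t)"
    if "k + 1 < m" "t > 0" "t \<notin> range ts" for k t
    unfolding y_def[abs_def]
    by (rule has_vector_derivative_of_real) (use xd[OF that] in \<open>auto intro!: derivative_eq_intros\<close>)
  have conv: "\<forall>k<n. (y k \<longlongrightarrow> 0) at_top"
  proof (rule poly_conv[where p = "cpoly a n" and C = "range ts" and ta = 0])
    show "degree (cpoly a n) = n" by (rule degree_cpoly)
    show "1 \<le> n" by (rule m(2))
    show "lead_coeff (cpoly a n) = 1" by (rule lead_cpoly)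
    show "\<forall>z. poly (cpoly a n) z = 0 \<longrightarrow> Re z < 0" using roots n1 by (simp add: poly_cpoly)
    show "\<forall>k<n. continuous_on {0..} (y k)"
      using cl i m unfolding closed_loop_solution_def y_def[abs_def]
      by (auto intro!: continuous_intros)
    show "\<And>a b. finite (range ts \<inter> {a..b})" by (rule fin)
    show "\<forall>t>0. t \<notin> range ts \<longrightarrow> (\<forall>k. k + 1 < n \<longrightarrow> (y k has_vector_derivative y (k + 1) t) (at t))"
    proof (intro allI impI)
      fix t k assume t: "t > 0" "t \<notin> range ts" and k: "k + 1 < n"
      have "y (k+1) t = complex_of_real (x i t (k+1))" by (simp add: y_def \<delta>_def)
      then show "(y k has_vector_derivative y (k + 1) t) (at t)"
        using yd[of k t] t k m by simp
    qed
    show "\<forall>t>0. t \<notin> range ts \<longrightarrow> (y (n - 1) has_vector_derivative r t - (\<Sum>k<n. coeff (cpoly a n) k * y k t)) (at t)"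
    proof (intro allI impI)
      fix t assume t: "t > 0" "t \<notin> range ts"
      have d: "(y (n-1) has_vector_derivative complex_of_real (x i t (n-1+1))) (at t)"
        by (rule yd) (use t m in auto)
      have "x i t n = zt t - zs - (\<Sum>k<n. a (k+1) * (x i t k - \<delta> k))"
        using ztsplit[of t] sd by (simp add: right_diff_distrib sum_subtractf)
      then have "complex_of_real (x i t n) = r t - (\<Sum>k<n. coeff (cpoly a n) k * y k t)"
        by (simp add: r_def y_def coeff_cpoly)
      then show "(y (n - 1) has_vector_derivative r t - (\<Sum>k<n. coeff (cpoly a n) k * y k t)) (at t)"
        using d m by simp
    qed
    have "((\<lambda>t. zt t - zs) \<longlongrightarrow> zs - zs) at_top"
      using zlim unfolding zt_def[abs_def] by (intro tendsto_intros)
    then have "((\<lambda>t. complex_of_real (zt t - zs)) \<longlongrightarrow> complex_of_real 0) at_top"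
      by (intro tendsto_of_real) simp
    then show "(r \<longlongrightarrow> 0) at_top" by (simp add: r_def[abs_def])
  qed
  have xc: "((\<lambda>t. x i t k) \<longlongrightarrow> \<delta> k) at_top" if k: "k < n" for k
  proof -
    have "((\<lambda>t. Re (y k t) + \<delta> k) \<longlongrightarrow> Re 0 + \<delta> k) at_top"
      using conv k by (intro tendsto_intros) auto
    then show ?thesis by (simp add: y_def)
  qed
  have xn: "((\<lambda>t. x i t n) \<longlongrightarrow> 0) at_top"
  proof -
    have "((\<lambda>t. zt t - (\<Sum>k<n. a (k+1) * x i t k)) \<longlongrightarrow> zs - (\<Sum>k<n. a (k+1) * \<delta> k)) at_top"
      using zlim xc unfolding zt_def[abs_def] by (intro tendsto_intros) auto
    then show ?thesis using sd by (simp add: ztsplit)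
  qed
  show ?thesis
  proof (intro allI impI)
    fix c assume c: "c < m"
    show "((\<lambda>t. x i t c) \<longlongrightarrow> (if c = 0 then zs / a 1 else 0)) at_top"
    proof (cases "c < n")
      case True then show ?thesis using xc[OF True] by (simp add: \<delta>_def)
    next
      case False
      then have "c = n" using c m by simp
      then show ?thesis using xn m by simp
    qed
  qed
qed




theorem theorem1:
  fixes N m :: nat and a :: "nat \<Rightarrow> real" and S :: "'s set"
    and w :: "'s \<Rightarrow> nat \<Rightarrow> nat \<Rightarrow> real" and \<sigma> :: "real \<Rightarrow> 's"
    and ts :: "nat \<Rightarrow> real" and tauD :: real
    and x :: "nat \<Rightarrow> real \<Rightarrow> nat \<Rightarrow> real"
  assumes "N \<ge> 1" and "m \<ge> 2"
    and "finite S"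
    and "\<forall>k\<in>S. \<forall>i j. w k i j \<ge> 0"
    and "\<forall>k\<in>S. \<forall>i. w k i i = 0"
    and "dwell_time_switching S \<sigma> ts tauD"
    and "\<forall>z::complex. z ^ (m - 1) + (\<Sum>k<m - 1. complex_of_real (a (k + 1)) * z ^ k) = 0
            \<longrightarrow> Re z < 0"
    and "ujqsc N w \<sigma>"
    and "closed_loop_solution N m a w \<sigma> ts x"
  shows "\<exists>xbar::real. \<forall>i<N. \<forall>c<m.
           ((\<lambda>t. x i t c) \<longlongrightarrow> (if c = 0 then xbar / a 1 else 0)) at_top"
proof -
  note N1 = assms(1) and m2 = assms(2) and finS = assms(3) and wnn = assms(4)
    and dw = assms(6) and roots = assms(7) and uj = assms(8) and cl = assms(9)
  have tau: "tauD > 0" and sigS: "\<And>t. t \<ge> 0 \<Longrightarrow> \<sigma> t \<in> S"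
    and sigc: "\<And>n t. ts n \<le> t \<Longrightarrow> t < ts (Suc n) \<Longrightarrow> \<sigma> t = \<sigma> (ts n)"
    and gap: "\<And>n. ts (Suc n) - ts n \<ge> tauD"
    using dw by (auto simp: dwell_time_switching_def)
  obtain n where mn: "m = Suc n" "n \<ge> 1" using m2 by (metis Suc_diff_1 Suc_le_D le_add1 plus_1_eq_Suc Suc_le_mono numeral_2_eq_2 order_trans zero_less_Suc)
  obtain T where T: "T > 0" "\<forall>t\<ge>0. quasi_strongly_connected N (union_edges N w \<sigma> t (t + T))"
    using uj by (auto simp: ujqsc_def)
  define Wmax where "Wmax = (\<Sum>k\<in>S. \<Sum>i<N. \<Sum>j<N. w k i j)"
  define Wp where "Wp = (\<lambda>(k, i, j). w k i j) ` (S \<times> {..<N} \<times> {..<N}) \<inter> {0<..}"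
  define wmin where "wmin = Min (insert 1 Wp)"
  have finWp: "finite Wp" unfolding Wp_def using finS by auto
  have wmin_pos: "wmin > 0"
  proof -
    have "wmin \<in> insert 1 Wp" unfolding wmin_def using finWp by (intro Min_in) auto
    then show ?thesis by (auto simp: Wp_def)
  qed
  have wmin_le: "wmin \<le> w k i j" if "k \<in> S" "i < N" "j < N" "w k i j > 0" for k i j
  proof -
    have "w k i j \<in> Wp" unfolding Wp_def using that by force
    then show ?thesis unfolding wmin_def using finWp by (intro Min_le) auto
  qed
  have Wle: "w k i j \<le> Wmax" if "k \<in> S" "i < N" "j < N" for k i j
  proof -
    have "w k i j \<le> (\<Sum>j<N. w k i j)" using that wnn by (intro member_le_sum) auto
    also have "\<dots> \<le> (\<Sum>i<N. \<Sum>j<N. w k i j)" using that wnn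
      by (intro member_le_sum[of i "{..<N}" "\<lambda>i. \<Sum>j<N. w k i j"]) (auto intro: sum_nonneg)
    also have "\<dots> \<le> Wmax" unfolding Wmax_def using that wnn finS
      by (intro member_le_sum[of k S "\<lambda>k. \<Sum>i<N. \<Sum>j<N. w k i j"]) (auto intro!: sum_nonneg)
    finally show ?thesis .
  qed
  interpret G: cons_graph N "\<lambda>t i j. w (\<sigma> t) i j" "range ts" Wmax wmin tauD T
  proof unfold_locales
    show "N \<ge> 1" by (rule N1)
    show "\<And>a b. finite (range ts \<inter> {a..b})" by (rule ts_fin[OF dw])
    show "\<And>t i j. t \<ge> 0 \<Longrightarrow> w (\<sigma> t) i j \<ge> 0" using wnn sigS by auto
    show "\<And>t i j. t \<ge> 0 \<Longrightarrow> i < N \<Longrightarrow> j < N \<Longrightarrow> w (\<sigma> t) i j \<le> Wmax" using Wle sigS by auto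
    show "wmin > 0" by (rule wmin_pos)
    show "tauD > 0" by (rule tau)
    show "T > 0" by (rule T(1))
  next
    fix s :: real assume s: "s \<ge> tauD"
    define Eg where "Eg = {(i, j). i < N \<and> j < N \<and>
        (\<exists>c. s - tauD \<le> c \<and> c + tauD \<le> s + T + tauD \<and> (\<forall>u\<in>{c<..<c+tauD}. w (\<sigma> u) j i \<ge> wmin))}"
    have s0: "s \<ge> 0" using s tau by simp
    obtain r where r: "r < N" "\<forall>b<N. (r, b) \<in> (union_edges N w \<sigma> s (s + T))\<^sup>*"
      using T(2) s0 by (auto simp: quasi_strongly_connected_def)
    have sub: "union_edges N w \<sigma> s (s + T) \<subseteq> Eg"
    proof
      fix p assume "p \<in> union_edges N w \<sigma> s (s + T)"
      then obtain a b t' where p: "p = (a, b)" "a < N" "b < N" "t' \<in> {s..<s+T}" "w (\<sigma> t') b a > 0"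
        by (auto simp: union_edges_def)
      have t'0: "t' \<ge> 0" using p(4) s0 by auto
      obtain k where k: "ts k \<le> t'" "t' < ts (Suc k)" using ts_interval[OF dw t'0] by auto
      define c where "c = max (ts k) (t' - tauD)"
      have "\<forall>u\<in>{c<..<c+tauD}. w (\<sigma> u) b a \<ge> wmin"
      proof
        fix u assume u: "u \<in> {c<..<c+tauD}"
        have "ts k \<le> u" using u by (auto simp: c_def)
        moreover have "u < ts (Suc k)" using u gap[of k] k by (auto simp: c_def)
        ultimately have "\<sigma> u = \<sigma> t'" using sigc[of k u] sigc[OF k] by simp
        then show "w (\<sigma> u) b a \<ge> wmin" using wmin_le[OF sigS[OF t'0] p(3,2,5)] by simp
      qed
      moreover have "s - tauD \<le> c" "c + tauD \<le> s + T + tauD" using p(4) k tau by (auto simp: c_def)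
      ultimately show "p \<in> Eg" using p by (auto simp: Eg_def)
    qed
    show "\<exists>r<N. \<forall>b<N. (r, b) \<in> Eg\<^sup>*"
      using r rtrancl_mono[OF sub] by blast
  qed
  define z where "z i t = (\<Sum>c<m. gainK2 a m c * x i t c)" for i t
  have zsol: "G.sol z"
    unfolding G.sol_def
  proof (intro conjI allI impI)
    fix i assume i: "i < N"
    show "continuous_on {0..} (z i)" unfolding z_def[abs_def]
      using cl i unfolding closed_loop_solution_def by (auto intro!: continuous_intros)
  next
    fix i t assume i: "i < N" and t: "0 < t" "t \<notin> range ts"
    have "\<forall>j. w (\<sigma> t) i j \<ge> 0" using wnn sigS[of t] t by auto
    from z_deriv[OF mn(1) cl i t this]
    show "(z i has_real_derivative (\<Sum>j<N. w (\<sigma> t) i j * (z j t - z i t))) (at t)"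
      by (simp add: z_def[abs_def])
  qed
  obtain zs where zs: "\<forall>i<N. (z i \<longlongrightarrow> zs) at_top" using G.consensus[OF zsol] by blast
  have a1: "a 1 \<noteq> 0"
  proof
    assume a0: "a 1 = 0"
    have "(0::complex) ^ (m - 1) + (\<Sum>k<m - 1. complex_of_real (a (k + 1)) * 0 ^ k) = 0"
    proof -
      have "(\<Sum>k<m - 1. complex_of_real (a (k + 1)) * 0 ^ k) = (\<Sum>k<m - 1. if k = 0 then complex_of_real (a 1) else 0)"
        by (rule sum.cong) auto
      then show ?thesis using a0 mn by (simp add: sum.delta)
    qed
    then have "Re (0::complex) < 0" using roots by blast
    then show False by simp
  qed
  have "\<forall>i<N. \<forall>c<m. ((\<lambda>t. x i t c) \<longlongrightarrow> (if c = 0 then zs / a 1 else 0)) at_top"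
  proof (rule allI, rule impI)
    fix i assume i: "i < N"
    have "((\<lambda>t. \<Sum>c<m. gainK2 a m c * x i t c) \<longlongrightarrow> zs) at_top"
      using zs i by (simp add: z_def[abs_def])
    then show "\<forall>c<m. ((\<lambda>t. x i t c) \<longlongrightarrow> (if c = 0 then zs / a 1 else 0)) at_top"
      using agent_conv[OF mn cl i roots a1 _ ts_fin[OF dw]] by blast
  qed
  then show ?thesis by blast
qed



end
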